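(* Under the Gaussian copula model, fix $m\in\mathbb N$, $\alpha\in(0,1]$ and $\rho\in(0,1]$. Then: (a) for all integers $n,n'$ with $m\le n\le n'$, $$p^{\mathrm{G}}_{\mathrm{success}}(n,m,\alpha,\rho)\le p^{\mathrm{G}}_{\mathrm{success}}(n',m,\alpha,\rho);$$ (b) $\displaystyle\lim_{n\to\infty}p^{\mathrm{G}}_{\mathrm{success}}(n,m,\alpha,\rho)=1.$
   Context: Ordinal optimisation model: let $(Z_1,X_1),\dots,(Z_n,X_n)$ be i.i.d. copies of a pair $(Z,X)$ of real random variables. Order $Z_1,\dots,Z_n$ increasingly as $Z_{1:n}\le\dots\le Z_{n:n}$ and let $X_{\langle i\rangle}$ denote the $X$-value paired with $Z_{i:n}$. Let $x^*_\alpha$ be the $\alpha$-quantile of $X$. The success probability is $\Pr(\min_{1\le i\le m}X_{\langle i\rangle}\le x^*_\alpha)$. Gaussian copula model with correlation $\rho$: $Z,X$ have continuous marginal CDFs $F_Z,F_X$ and joint CDF $\boldsymbol\Phi_{\rho}(\Phi^{-1}(F_Z(z)),\Phi^{-1}(F_X(x)))$, with $\Phi$ the standard normal CDF and $\boldsymbol\Phi_\rho$ the standard bivariate normal CDF with correlation $\rho$. The success probability in this model is $p^{\mathrm{G}}_{\mathrm{success}}(n,m,\alpha,\rho)$. *)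

theory Defs
  imports "HOL-Probability.Probability"
begin

definition std_normal :: "real measure" where
  "std_normal = density lborel std_normal_density"

text \<open>Law of a pair (Z,X) with standard normal marginals and Gaussian copula with
  correlation rho: (Z,X) = (U, rho U + sqrt(1 - rho^2) V), U,V i.i.d. standard normal.
  (This also covers the degenerate case rho = 1.)\<close>
definition gauss_pair :: "real \<Rightarrow> (real \<times> real) measure" where
  "gauss_pair \<rho> = distr (std_normal \<Otimes>\<^sub>M std_normal) (borel \<Otimes>\<^sub>M borel)
     (\<lambda>(u, v). (u, \<rho> * u + sqrt (1 - \<rho>\<^sup>2) * v))"

text \<open>alpha-quantile of X (generalised inverse of its CDF), as an extended real
  (equals +infinity when alpha = 1).\<close>
definition xstar :: "real \<Rightarrow> real \<Rightarrow> ereal" where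
  "xstar \<alpha> \<rho> = Inf {ereal x | x. \<alpha> \<le> measure (gauss_pair \<rho>) {p. snd p \<le> x}}"

text \<open>Success probability: among n i.i.d. pairs (Z_j, X_j), the pairs whose Z-value is
  among the m smallest (Z_j has fewer than m strictly smaller Z-values; ties have
  probability zero) contain one with X_j \<le> x*_alpha.\<close>
definition p_success_G :: "nat \<Rightarrow> nat \<Rightarrow> real \<Rightarrow> real \<Rightarrow> real" where
  "p_success_G n m \<alpha> \<rho> =
     measure (PiM {..<n} (\<lambda>_. gauss_pair \<rho>))
       {\<omega> \<in> space (PiM {..<n} (\<lambda>_. gauss_pair \<rho>)).
          \<exists>j<n. card {k \<in> {..<n}. fst (\<omega> k) < fst (\<omega> j)} < m
               \<and> ereal (snd (\<omega> j)) \<le> xstar \<alpha> \<rho>}"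

end

theory Submission
  imports Defs
begin

lemma N_prob: "prob_space std_normal"
  unfolding std_normal_def by (rule prob_space_normal_density) simp

lemma sets_N[measurable_cong, simp]: "sets std_normal = sets borel"
  unfolding std_normal_def by simp

lemma space_N[simp]: "space std_normal = UNIV"
  unfolding std_normal_def by simp

definition T :: "real \<Rightarrow> real \<times> real \<Rightarrow> real \<times> real" where
  "T \<rho> = (\<lambda>(u, v). (u, \<rho> * u + sqrt (1 - \<rho>\<^sup>2) * v))"

lemma T_meas[measurable]: "T \<rho> \<in> borel \<Otimes>\<^sub>M borel \<rightarrow>\<^sub>M borel \<Otimes>\<^sub>M borel"
  unfolding T_def by measurable

lemma T_meas'[measurable]: "T \<rho> \<in> std_normal \<Otimes>\<^sub>M std_normal \<rightarrow>\<^sub>M borel \<Otimes>\<^sub>M borel"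
  unfolding T_def by measurable

lemma gp_def: "gauss_pair \<rho> = distr (std_normal \<Otimes>\<^sub>M std_normal) (borel \<Otimes>\<^sub>M borel) (T \<rho>)"
  unfolding gauss_pair_def T_def by simp

lemma P_prob: "prob_space (gauss_pair \<rho>)"
  unfolding gp_def
  by (intro prob_space.prob_space_distr prob_space_pair N_prob) simp

lemma sets_P[measurable_cong, simp]: "sets (gauss_pair \<rho>) = sets (borel \<Otimes>\<^sub>M borel)"
  unfolding gp_def by simp

lemma space_P[simp]: "space (gauss_pair \<rho>) = UNIV"
  unfolding gp_def by (simp add: space_pair_measure)

definition Psi :: "real \<Rightarrow> nat set \<Rightarrow> (nat \<Rightarrow> real) \<times> (nat \<Rightarrow> real) \<Rightarrow> nat \<Rightarrow> real \<times> real" where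
  "Psi \<rho> I = (\<lambda>x. \<lambda>j\<in>I. T \<rho> (fst x j, snd x j))"

lemma Psi_meas[measurable]:
  "Psi \<rho> I \<in> (PiM I (\<lambda>_. std_normal) \<Otimes>\<^sub>M PiM I (\<lambda>_. std_normal)) \<rightarrow>\<^sub>M PiM I (\<lambda>_. gauss_pair \<rho>)"
  unfolding Psi_def by measurable

lemma Sep:
  assumes I: "finite I"
  shows "PiM I (\<lambda>_. gauss_pair \<rho>) = distr (PiM I (\<lambda>_. std_normal) \<Otimes>\<^sub>M PiM I (\<lambda>_. std_normal)) (PiM I (\<lambda>_. gauss_pair \<rho>)) (Psi \<rho> I)"
proof -
  interpret PP: product_prob_space "\<lambda>_. gauss_pair \<rho>"
    by (intro product_prob_spaceI P_prob)
  interpret NN: product_prob_space "\<lambda>_. std_normal"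
    by (intro product_prob_spaceI N_prob)
  interpret N: prob_space std_normal by (rule N_prob)
  interpret PN: prob_space "PiM I (\<lambda>_. std_normal)" by (intro prob_space_PiM N_prob)
  interpret NNp: pair_sigma_finite std_normal std_normal ..
  let ?M2 = "PiM I (\<lambda>_. std_normal) \<Otimes>\<^sub>M PiM I (\<lambda>_. std_normal)"
  show ?thesis
  proof (rule sym, rule PP.PiM_eqI[OF I])
    show "sets (distr ?M2 (PiM I (\<lambda>_. gauss_pair \<rho>)) (Psi \<rho> I)) = sets (PiM I (\<lambda>_. gauss_pair \<rho>))"
      by simp
  next
    fix A assume A: "\<And>i. i \<in> I \<Longrightarrow> A i \<in> sets (gauss_pair \<rho>)"
    define Q where "Q j = T \<rho> -` A j \<inter> space (std_normal \<Otimes>\<^sub>M std_normal)" for j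
    have Q: "Q j \<in> sets (std_normal \<Otimes>\<^sub>M std_normal)" if "j \<in> I" for j
      unfolding Q_def using A[OF that] by (intro measurable_sets[OF T_meas']) simp
    define h where "h j x = emeasure std_normal (Pair x -` Q j)" for j x
    have hm: "h j \<in> borel_measurable std_normal" if "j \<in> I" for j
      unfolding h_def using sigma_finite_measure.measurable_emeasure_Pair[OF prob_space_imp_sigma_finite[OF N_prob], OF Q[OF that]] .
    have sec: "Pair x -` Q j = {v. T \<rho> (x, v) \<in> A j}" for j x
      by (auto simp: Q_def space_pair_measure)
    have secm: "{v. T \<rho> (x, v) \<in> A j} \<in> sets std_normal" if "j \<in> I" for j x
      using Q[OF that] sec[of x j] by (metis sets_Pair1)
    have X: "Psi \<rho> I -` Pi\<^sub>E I A \<inter> space ?M2 \<in> sets ?M2"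
      using A by (intro measurable_sets[OF Psi_meas]) (auto intro!: sets_PiM_I_finite I)
    have "emeasure (distr ?M2 (PiM I (\<lambda>_. gauss_pair \<rho>)) (Psi \<rho> I)) (Pi\<^sub>E I A)
        = emeasure ?M2 (Psi \<rho> I -` Pi\<^sub>E I A \<inter> space ?M2)"
      using A by (intro emeasure_distr Psi_meas) (auto intro!: sets_PiM_I_finite I)
    also have "\<dots> = (\<integral>\<^sup>+u. emeasure (PiM I (\<lambda>_. std_normal)) (Pair u -` (Psi \<rho> I -` Pi\<^sub>E I A \<inter> space ?M2)) \<partial>PiM I (\<lambda>_. std_normal))"
      by (rule sigma_finite_measure.emeasure_pair_measure_alt[OF prob_space_imp_sigma_finite[OF prob_space_PiM[OF N_prob]], OF X])
    also have "\<dots> = (\<integral>\<^sup>+u. (\<Prod>j\<in>I. h j (u j)) \<partial>PiM I (\<lambda>_. std_normal))"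
    proof (rule nn_integral_cong)
      fix u assume u: "u \<in> space (PiM I (\<lambda>_. std_normal))"
      have "Pair u -` (Psi \<rho> I -` Pi\<^sub>E I A \<inter> space ?M2) = Pi\<^sub>E I (\<lambda>j. {v. T \<rho> (u j, v) \<in> A j})"
        using u by (auto simp: Psi_def space_pair_measure space_PiM PiE_iff)
      then show "emeasure (PiM I (\<lambda>_. std_normal)) (Pair u -` (Psi \<rho> I -` Pi\<^sub>E I A \<inter> space ?M2)) = (\<Prod>j\<in>I. h j (u j))"
        using secm by (simp add: NN.emeasure_PiM I h_def sec)
    qed
    also have "\<dots> = (\<Prod>j\<in>I. integral\<^sup>N std_normal (h j))"
      by (rule NN.product_nn_integral_prod[OF I hm])
    also have "\<dots> = (\<Prod>j\<in>I. emeasure (gauss_pair \<rho>) (A j))"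
    proof (rule prod.cong[OF refl])
      fix j assume j: "j \<in> I"
      have "integral\<^sup>N std_normal (h j) = emeasure (std_normal \<Otimes>\<^sub>M std_normal) (Q j)"
        unfolding h_def by (rule sigma_finite_measure.emeasure_pair_measure_alt[OF prob_space_imp_sigma_finite[OF N_prob], OF Q[OF j], symmetric])
      also have "\<dots> = emeasure (gauss_pair \<rho>) (A j)"
        unfolding gp_def Q_def using A[OF j] by (subst emeasure_distr) auto
      finally show "integral\<^sup>N std_normal (h j) = emeasure (gauss_pair \<rho>) (A j)" .
    qed
    finally show "emeasure (distr ?M2 (PiM I (\<lambda>_. gauss_pair \<rho>)) (Psi \<rho> I)) (Pi\<^sub>E I A) = (\<Prod>j\<in>I. emeasure (gauss_pair \<rho>) (A j))" .
  qed
qed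

lemma card_real_sum: "finite A \<Longrightarrow> real (card {k\<in>A. P k}) = (\<Sum>k\<in>A. if P k then 1 else 0)"
  by (simp add: sum.If_cases Int_def)

definition cnt :: "nat \<Rightarrow> (nat \<Rightarrow> real) \<Rightarrow> nat \<Rightarrow> nat" where
  "cnt n u j = card {k \<in> {..<n}. u k < u j}"

lemma cnt_less_iff: "(cnt n u j < m) \<longleftrightarrow> (\<Sum>k<n. if u k < u j then 1 else 0 :: real) < real m"
proof -
  have h: "real (cnt n u j) = (\<Sum>k<n. if u k < u j then 1 else 0)"
    unfolding cnt_def by (rule card_real_sum) simp
  show ?thesis by (simp only: h[symmetric] of_nat_less_iff)
qed

lemma pred_cnt:
  assumes f: "\<And>k. k < n \<Longrightarrow> (\<lambda>x. f x k) \<in> borel_measurable M" and [measurable]: "(\<lambda>x. f x j) \<in> borel_measurable M"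
  shows "Measurable.pred M (\<lambda>x. cnt n (f x) j < m)"
proof -
  have [measurable]: "(\<lambda>x. \<Sum>k<n. if f x k < f x j then 1 else 0 :: real) \<in> borel_measurable M"
  proof (rule borel_measurable_sum)
    fix k assume "k \<in> {..<n}"
    then have [measurable]: "(\<lambda>x. f x k) \<in> borel_measurable M" using f by auto
    show "(\<lambda>x. if f x k < f x j then 1 else 0 :: real) \<in> borel_measurable M" by measurable
  qed
  show ?thesis unfolding cnt_less_iff by measurable
qed

definition G :: "real \<Rightarrow> ereal \<Rightarrow> real \<Rightarrow> real" where
  "G \<rho> c x = measure std_normal {v. \<not> ereal (\<rho> * x + sqrt (1 - \<rho>\<^sup>2) * v) \<le> c}"

lemma G_set_meas[measurable]: "{v. \<not> ereal (\<rho> * x + sqrt (1 - \<rho>\<^sup>2) * v) \<le> c} \<in> sets borel"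
  by measurable

lemma G_mono: assumes "0 < \<rho>" shows "mono (G \<rho> c)"
proof (rule monoI)
  fix x y :: real assume "x \<le> y"
  then have "\<rho> * x \<le> \<rho> * y" using assms by simp
  then have "{v. \<not> ereal (\<rho> * x + sqrt (1 - \<rho>\<^sup>2) * v) \<le> c} \<subseteq> {v. \<not> ereal (\<rho> * y + sqrt (1 - \<rho>\<^sup>2) * v) \<le> c}"
    by (auto intro: order_trans[rotated])
  then show "G \<rho> c x \<le> G \<rho> c y"
    unfolding G_def by (intro finite_measure.finite_measure_mono prob_space.axioms(1) N_prob) auto
qed

lemma G_meas[measurable]: "0 < \<rho> \<Longrightarrow> G \<rho> c \<in> borel_measurable borel"
  by (rule borel_measurable_mono[OF G_mono])

lemma G_nonneg: "0 \<le> G \<rho> c x" unfolding G_def by simp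
lemma G_le1: "G \<rho> c x \<le> 1" unfolding G_def by (rule prob_space.prob_le_1[OF N_prob])

definition Phi :: "nat \<Rightarrow> nat \<Rightarrow> real \<Rightarrow> ereal \<Rightarrow> (nat \<Rightarrow> real) \<Rightarrow> real" where
  "Phi n m \<rho> c u = (\<Prod>j<n. if cnt n u j < m then G \<rho> c (u j) else 1)"

lemma Phi_meas[measurable]: assumes [measurable]: "0 < \<rho>" shows "Phi n m \<rho> c \<in> borel_measurable (PiM {..<n} (\<lambda>_. std_normal))"
  unfolding Phi_def
proof (rule borel_measurable_prod)
  fix j assume j: "j \<in> {..<n}"
  have [measurable]: "Measurable.pred (PiM {..<n} (\<lambda>_. std_normal)) (\<lambda>x. cnt n x j < m)"
    using j by (intro pred_cnt) auto
  have [measurable]: "(\<lambda>x. x j) \<in> borel_measurable (PiM {..<n} (\<lambda>_. std_normal))"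
    using measurable_component_singleton[of j "{..<n}" "\<lambda>_. std_normal"] j
    by (simp add: measurable_cong_sets[OF refl sets_N])
  show "(\<lambda>x. if cnt n x j < m then G \<rho> c (x j) else 1) \<in> borel_measurable (PiM {..<n} (\<lambda>_. std_normal))"
    by measurable
qed

lemma cnt_cong: "(\<And>k. k < n \<Longrightarrow> u k = u' k) \<Longrightarrow> j < n \<Longrightarrow> cnt n u j = cnt n u' j"
  unfolding cnt_def by (intro arg_cong[where f=card]) auto

definition FailS :: "nat \<Rightarrow> nat \<Rightarrow> real \<Rightarrow> ereal \<Rightarrow> (nat \<Rightarrow> real \<times> real) set" where
  "FailS n m \<rho> c = {\<omega> \<in> space (PiM {..<n} (\<lambda>_. gauss_pair \<rho>)).
      \<forall>j\<in>{..<n}. cnt n (\<lambda>k. fst (\<omega> k)) j < m \<longrightarrow> \<not> ereal (snd (\<omega> j)) \<le> c}"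

lemma FailS_sets: "FailS n m \<rho> c \<in> sets (PiM {..<n} (\<lambda>_. gauss_pair \<rho>))"
  unfolding FailS_def
proof (rule sets.sets_Collect_finite_All)
  fix j assume j: "j \<in> {..<n}"
  let ?Q = "PiM {..<n} (\<lambda>_. gauss_pair \<rho>)"
  have cm: "(\<lambda>\<omega>. \<omega> k) \<in> ?Q \<rightarrow>\<^sub>M borel \<Otimes>\<^sub>M borel" if "k < n" for k
    using measurable_component_singleton[of k "{..<n}" "\<lambda>_. gauss_pair \<rho>"] that
    by (simp add: measurable_cong_sets[OF refl sets_P])
  have [measurable]: "(\<lambda>\<omega>. \<omega> j) \<in> ?Q \<rightarrow>\<^sub>M borel \<Otimes>\<^sub>M borel" using cm j by auto
  have [measurable]: "Measurable.pred ?Q (\<lambda>\<omega>. cnt n (\<lambda>k. fst (\<omega> k)) j < m)"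
    by (rule pred_cnt) (use cm j in \<open>auto intro: measurable_compose[OF _ measurable_fst''] \<close>)
  show "{\<omega> \<in> space ?Q. cnt n (\<lambda>k. fst (\<omega> k)) j < m \<longrightarrow> \<not> ereal (snd (\<omega> j)) \<le> c} \<in> sets ?Q"
    by measurable
qed simp

lemma p_eq:
  "p_success_G n m \<alpha> \<rho> = 1 - measure (PiM {..<n} (\<lambda>_. gauss_pair \<rho>)) (FailS n m \<rho> (xstar \<alpha> \<rho>))"
proof -
  interpret Q: prob_space "PiM {..<n} (\<lambda>_. gauss_pair \<rho>)" by (intro prob_space_PiM P_prob)
  have "{\<omega> \<in> space (PiM {..<n} (\<lambda>_. gauss_pair \<rho>)).
          \<exists>j<n. card {k \<in> {..<n}. fst (\<omega> k) < fst (\<omega> j)} < m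
               \<and> ereal (snd (\<omega> j)) \<le> xstar \<alpha> \<rho>} = space (PiM {..<n} (\<lambda>_. gauss_pair \<rho>)) - FailS n m \<rho> (xstar \<alpha> \<rho>)"
    unfolding FailS_def cnt_def by auto
  then show ?thesis unfolding p_success_G_def using Q.prob_compl[OF FailS_sets] by simp
qed

lemma mem_Fail:
  "Psi \<rho> {..<n} (u, v) \<in> FailS n m \<rho> c \<longleftrightarrow>
     (\<forall>j<n. cnt n u j < m \<longrightarrow> \<not> ereal (\<rho> * u j + sqrt (1 - \<rho>\<^sup>2) * v j) \<le> c)"
proof -
  have ce: "cnt n (\<lambda>k. fst (Psi \<rho> {..<n} (u, v) k)) j = cnt n u j" if "j < n" for j
    using that by (intro cnt_cong) (auto simp: Psi_def T_def)
  have sp: "Psi \<rho> {..<n} (u, v) \<in> space (PiM {..<n} (\<lambda>_. gauss_pair \<rho>))"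
    by (auto simp: Psi_def space_PiM)
  have sn: "snd (Psi \<rho> {..<n} (u, v) j) = \<rho> * u j + sqrt (1 - \<rho>\<^sup>2) * v j" if "j < n" for j
    using that by (simp add: Psi_def T_def)
  show ?thesis unfolding FailS_def using sp ce sn by auto
qed

lemma fail_eq:
  assumes rho: "0 < \<rho>"
  shows "emeasure (PiM {..<n} (\<lambda>_. gauss_pair \<rho>)) (FailS n m \<rho> c)
       = (\<integral>\<^sup>+u. ennreal (Phi n m \<rho> c u) \<partial>PiM {..<n} (\<lambda>_. std_normal))"
proof -
  let ?I = "{..<n}"
  let ?N = "PiM ?I (\<lambda>_. std_normal)"
  let ?M2 = "?N \<Otimes>\<^sub>M ?N"
  let ?s = "sqrt (1 - \<rho>\<^sup>2)"
  interpret SN: prob_space std_normal by (rule N_prob)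
  interpret NN: product_prob_space "\<lambda>_. std_normal"
    by (intro product_prob_spaceI N_prob)
  have X: "Psi \<rho> ?I -` FailS n m \<rho> c \<inter> space ?M2 \<in> sets ?M2"
    by (intro measurable_sets[OF Psi_meas] FailS_sets)
  have "emeasure (PiM ?I (\<lambda>_. gauss_pair \<rho>)) (FailS n m \<rho> c)
      = emeasure (distr ?M2 (PiM ?I (\<lambda>_. gauss_pair \<rho>)) (Psi \<rho> ?I)) (FailS n m \<rho> c)"
    by (subst Sep[of ?I \<rho>]) simp_all
  also have "\<dots> = emeasure ?M2 (Psi \<rho> ?I -` FailS n m \<rho> c \<inter> space ?M2)"
    by (intro emeasure_distr Psi_meas FailS_sets)
  also have "\<dots> = (\<integral>\<^sup>+u. emeasure ?N (Pair u -` (Psi \<rho> ?I -` FailS n m \<rho> c \<inter> space ?M2)) \<partial>?N)"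
    by (rule sigma_finite_measure.emeasure_pair_measure_alt[OF prob_space_imp_sigma_finite[OF prob_space_PiM[OF N_prob]], OF X])
  also have "\<dots> = (\<integral>\<^sup>+u. ennreal (Phi n m \<rho> c u) \<partial>?N)"
  proof (rule nn_integral_cong)
    fix u assume u: "u \<in> space ?N"
    define B where "B j = (if cnt n u j < m then {v. \<not> ereal (\<rho> * u j + ?s * v) \<le> c} else UNIV)" for j
    have Bm: "B j \<in> sets std_normal" for j unfolding B_def by simp
    have "Pair u -` (Psi \<rho> ?I -` FailS n m \<rho> c \<inter> space ?M2) = Pi\<^sub>E ?I B"
    proof (intro set_eqI iffI)
      fix v assume v: "v \<in> Pair u -` (Psi \<rho> ?I -` FailS n m \<rho> c \<inter> space ?M2)"
      then have vs: "v \<in> space ?N" using u by (simp add: space_pair_measure)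
      have "\<forall>j<n. cnt n u j < m \<longrightarrow> \<not> ereal (\<rho> * u j + ?s * v j) \<le> c"
        using v mem_Fail by blast
      then show "v \<in> Pi\<^sub>E ?I B"
        using vs by (auto simp: B_def space_PiM PiE_iff)
    next
      fix v assume v: "v \<in> Pi\<^sub>E ?I B"
      then have vs: "v \<in> space ?N" by (auto simp: space_PiM PiE_iff)
      have "\<forall>j<n. cnt n u j < m \<longrightarrow> \<not> ereal (\<rho> * u j + ?s * v j) \<le> c"
      proof (intro allI impI)
        fix j assume j: "j < n" "cnt n u j < m"
        have "v j \<in> B j" using v j(1) by (simp add: PiE_iff)
        then show "\<not> ereal (\<rho> * u j + ?s * v j) \<le> c" using j(2) by (simp add: B_def)
      qed
      then have "Psi \<rho> ?I (u, v) \<in> FailS n m \<rho> c" using mem_Fail by blast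
      then show "v \<in> Pair u -` (Psi \<rho> ?I -` FailS n m \<rho> c \<inter> space ?M2)"
        using vs u by (auto simp: space_pair_measure)
    qed
    also have "emeasure ?N (Pi\<^sub>E ?I B) = (\<Prod>j\<in>?I. emeasure std_normal (B j))"
      using Bm by (simp add: NN.emeasure_PiM)
    also have "\<dots> = (\<Prod>j\<in>?I. ennreal (if cnt n u j < m then G \<rho> c (u j) else 1))"
      by (intro prod.cong refl) (auto simp: B_def G_def SN.emeasure_eq_measure SN.prob_space[simplified])
    also have "\<dots> = ennreal (Phi n m \<rho> c u)"
      unfolding Phi_def by (rule prod_ennreal) (auto simp: G_nonneg)
    finally show "emeasure ?N (Pair u -` (Psi \<rho> ?I -` FailS n m \<rho> c \<inter> space ?M2)) = ennreal (Phi n m \<rho> c u)" .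
  qed
  finally show ?thesis .
qed

lemma cnt_Suc: "cnt (Suc n) u j = cnt n u j + (if u n < u j then 1 else 0)"
proof -
  have e: "{k \<in> {..<Suc n}. u k < u j} = {k \<in> {..<n}. u k < u j} \<union> (if u n < u j then {n} else {})"
    by (auto simp: less_Suc_eq)
  show ?thesis unfolding cnt_def e by (simp add: card_insert_if)
qed

lemma cnt_mono_val: "u a \<le> u b \<Longrightarrow> cnt n u a \<le> cnt n u b"
  unfolding cnt_def by (rule card_mono) auto

lemma cnt_strict: "j1 < n \<Longrightarrow> u j1 < u j2 \<Longrightarrow> cnt n u j1 < cnt n u j2"
  unfolding cnt_def by (rule psubset_card_mono) auto

lemma prod_le_factor:
  fixes f :: "nat \<Rightarrow> real"
  assumes "finite A" "\<And>j. j \<in> A \<Longrightarrow> 0 \<le> f j" "\<And>j. j \<in> A \<Longrightarrow> f j \<le> 1"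
  shows "prod f A \<le> 1"
  using assms by (intro prod_le_1) auto

lemma step_ineq:
  fixes g :: "real \<Rightarrow> real"
  assumes inj: "inj_on u {..<Suc n}" and gm: "mono g" and g0: "\<And>x. 0 \<le> g x" and g1: "\<And>x. g x \<le> 1"
  shows "(\<Prod>j<Suc n. if cnt (Suc n) u j < m then g (u j) else 1) \<le> (\<Prod>j<n. if cnt n u j < m then g (u j) else 1)"
proof -
  define a where "a j = (if cnt n u j < m then g (u j) else 1)" for j
  define b where "b j = (if cnt (Suc n) u j < m then g (u j) else 1)" for j
  have a0: "0 \<le> a j" "a j \<le> 1" for j using g0 g1 by (auto simp: a_def)
  have b0: "0 \<le> b j" "b j \<le> 1" for j using g0 g1 by (auto simp: b_def)
  have lhs: "(\<Prod>j<Suc n. b j) = (\<Prod>j<n. b j) * b n" by simp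
  show ?thesis
  proof (cases "\<exists>d<n. a d \<noteq> b d")
    case False
    then have "(\<Prod>j<n. b j) = (\<Prod>j<n. a j)" by (intro prod.cong) auto
    moreover have "(\<Prod>j<n. a j) * b n \<le> (\<Prod>j<n. a j)"
      using b0 a0 by (intro mult_left_le prod_nonneg) auto
    ultimately show ?thesis using lhs by (simp add: a_def b_def)
  next
    case True
    then obtain d where d: "d < n" "a d \<noteq> b d" by blast
    have dD: "cnt n u d < m" "\<not> cnt (Suc n) u d < m" "u n < u d"
      using d(2) by (auto simp: a_def b_def cnt_Suc split: if_splits)
    then have cd: "cnt n u d = m - 1" by (auto simp: cnt_Suc)
    have cn: "cnt (Suc n) u n < m"
    proof -
      have "cnt n u n \<le> cnt n u d" using dD(3) by (intro cnt_mono_val) simp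
      then show ?thesis using dD(1) by (simp add: cnt_Suc)
    qed
    have bn: "b n = g (u n)" using cn by (simp add: b_def)
    have other: "a j = b j" if "j < n" "j \<noteq> d" for j
    proof (rule ccontr)
      assume "a j \<noteq> b j"
      then have jD: "cnt n u j < m" "\<not> cnt (Suc n) u j < m" "u n < u j"
        by (auto simp: a_def b_def cnt_Suc split: if_splits)
      then have cj: "cnt n u j = m - 1" by (auto simp: cnt_Suc)
      have "u j \<noteq> u d" using inj that d(1) by (auto dest: inj_onD)
      then have "u j < u d \<or> u d < u j" by auto
      then show False
      proof
        assume "u j < u d" then have "cnt n u j < cnt n u d" using that by (intro cnt_strict)
        then show False using cj cd by simp
      next
        assume "u d < u j" then have "cnt n u d < cnt n u j" using d by (intro cnt_strict)
        then show False using cj cd by simp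
      qed
    qed
    have bd: "b d = 1" using dD(2) by (simp add: b_def)
    have ad: "a d = g (u d)" using dD(1) by (simp add: a_def)
    have R: "(\<Prod>j<n. b j) = (\<Prod>j\<in>{..<n}-{d}. a j)"
      using d(1) bd other by (subst prod.remove[of _ d]) (auto intro!: prod.cong)
    have L: "(\<Prod>j<n. a j) = a d * (\<Prod>j\<in>{..<n}-{d}. a j)"
      using d(1) by (subst prod.remove[of _ d]) auto
    have "g (u n) \<le> g (u d)" using monoD[OF gm, of "u n" "u d"] dD(3) by simp
    then have le: "(\<Prod>j\<in>{..<n}-{d}. a j) * g (u n) \<le> (\<Prod>j\<in>{..<n}-{d}. a j) * g (u d)"
      using a0 by (intro mult_left_mono prod_nonneg) auto
    have "(\<Prod>j<Suc n. b j) \<le> (\<Prod>j<n. a j)"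
    proof -
      have "(\<Prod>j<Suc n. b j) = (\<Prod>j\<in>{..<n}-{d}. a j) * g (u n)" using lhs R bn by simp
      also have "\<dots> \<le> (\<Prod>j\<in>{..<n}-{d}. a j) * g (u d)" by (rule le)
      also have "\<dots> = (\<Prod>j<n. a j)" using L ad by simp
      finally show ?thesis .
    qed
    then show ?thesis by (simp only: a_def b_def)
  qed
qed

lemma N_singleton_null: "{a} \<in> null_sets std_normal"
proof -
  have "AE x in lborel. x \<in> {a} \<longrightarrow> ennreal (std_normal_density x) = 0"
    using AE_lborel_singleton[of a] by eventually_elim auto
  then show ?thesis unfolding std_normal_def by (subst null_sets_density_iff) auto
qed

lemma AE_neq:
  assumes I: "finite I" and j: "j \<in> I" and k: "k \<in> I" and jk: "j \<noteq> k"
  shows "AE u in PiM I (\<lambda>_. std_normal). u j \<noteq> u k"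
proof -
  interpret SN: prob_space std_normal by (rule N_prob)
  interpret NN: product_prob_space "\<lambda>_. std_normal"
    by (intro product_prob_spaceI N_prob)
  let ?S = "{u \<in> space (PiM I (\<lambda>_. std_normal)). u j = u k}"
  have jm[measurable]: "(\<lambda>u. u j) \<in> borel_measurable (PiM I (\<lambda>_. std_normal))"
    using measurable_component_singleton[of j I "\<lambda>_. std_normal"] j
    by (simp add: measurable_cong_sets[OF refl sets_N])
  have km[measurable]: "(\<lambda>u. u k) \<in> borel_measurable (PiM I (\<lambda>_. std_normal))"
    using measurable_component_singleton[of k I "\<lambda>_. std_normal"] k
    by (simp add: measurable_cong_sets[OF refl sets_N])
  have Sm: "?S \<in> sets (PiM I (\<lambda>_. std_normal))" by measurable
  have II: "insert j (I - {j}) = I" using j by auto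
  have "emeasure (PiM I (\<lambda>_. std_normal)) ?S = (\<integral>\<^sup>+u. indicator ?S u \<partial>PiM I (\<lambda>_. std_normal))"
    using Sm by simp
  also have "\<dots> = (\<integral>\<^sup>+x. (\<integral>\<^sup>+y. indicator ?S (x(j := y)) \<partial>std_normal) \<partial>PiM (I - {j}) (\<lambda>_. std_normal))"
    using NN.product_nn_integral_insert[of "I - {j}" j "indicator ?S"] I Sm unfolding II by simp
  also have "\<dots> = (\<integral>\<^sup>+x. 0 \<partial>PiM (I - {j}) (\<lambda>_. std_normal))"
  proof (rule nn_integral_cong)
    fix x assume x: "x \<in> space (PiM (I - {j}) (\<lambda>_. std_normal))"
    have "(indicator ?S (x(j := y)) :: ennreal) = indicator {x k} y" for y :: real
      using x j k jk by (auto simp: indicator_def space_PiM PiE_iff extensional_def)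
    then have "(\<integral>\<^sup>+y. indicator ?S (x(j := y)) \<partial>std_normal) = (\<integral>\<^sup>+y. indicator {x k} y \<partial>std_normal)"
      by simp
    also have "\<dots> = emeasure std_normal {x k}" by simp
    also have "\<dots> = 0" using N_singleton_null by auto
    finally show "(\<integral>\<^sup>+y. indicator ?S (x(j := y)) \<partial>std_normal) = 0" .
  qed
  finally have "emeasure (PiM I (\<lambda>_. std_normal)) ?S = 0" by simp
  then show ?thesis using Sm by (subst AE_iff_measurable[of ?S]) auto
qed

lemma AE_inj: fixes n :: nat shows "AE u in PiM {..<n} (\<lambda>_. std_normal). inj_on u {..<n}"
proof -
  have "AE u in PiM {..<n} (\<lambda>_. std_normal). \<forall>j\<in>{..<n}. \<forall>k\<in>{..<n}. j \<noteq> k \<longrightarrow> u j \<noteq> u k"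
  proof (intro AE_finite_allI finite_lessThan)
    fix j k assume jk: "j \<in> {..<n}" "k \<in> {..<n}"
    show "AE u in PiM {..<n} (\<lambda>_. std_normal). j \<noteq> k \<longrightarrow> u j \<noteq> u k"
    proof (cases "j = k")
      case False
      show ?thesis by (rule AE_mp[OF AE_neq[of "{..<n}" j k]]) (use jk False in auto)
    qed simp
  qed
  then show ?thesis by eventually_elim (auto simp: inj_on_def)
qed

lemma Phi_restrict: "Phi n m \<rho> c (restrict u {..<n}) = Phi n m \<rho> c u"
  unfolding Phi_def
proof (rule prod.cong[OF refl])
  fix j assume j: "j \<in> {..<n}"
  then have "cnt n (restrict u {..<n}) j = cnt n u j" by (intro cnt_cong) auto
  then show "(if cnt n (restrict u {..<n}) j < m then G \<rho> c (restrict u {..<n} j) else 1) =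
        (if cnt n u j < m then G \<rho> c (u j) else 1)" using j by simp
qed

lemma fail_mono:
  assumes rho: "0 < \<rho>"
  shows "(\<integral>\<^sup>+u. ennreal (Phi (Suc n) m \<rho> c u) \<partial>PiM {..<Suc n} (\<lambda>_. std_normal))
       \<le> (\<integral>\<^sup>+u. ennreal (Phi n m \<rho> c u) \<partial>PiM {..<n} (\<lambda>_. std_normal))"
proof -
  interpret NN: product_prob_space "\<lambda>_. std_normal"
    by (intro product_prob_spaceI N_prob)
  have [measurable]: "Phi n m \<rho> c \<in> borel_measurable (PiM {..<n} (\<lambda>_. std_normal))"
    using rho by (rule Phi_meas)
  have "(\<integral>\<^sup>+u. ennreal (Phi n m \<rho> c u) \<partial>PiM {..<n} (\<lambda>_. std_normal))
      = (\<integral>\<^sup>+u. ennreal (Phi n m \<rho> c u) \<partial>distr (PiM {..<Suc n} (\<lambda>_. std_normal)) (PiM {..<n} (\<lambda>_. std_normal)) (\<lambda>f. restrict f {..<n}))"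
    by (subst NN.distr_restrict[of "{..<n}" "{..<Suc n}"]) auto
  also have "\<dots> = (\<integral>\<^sup>+u. ennreal (Phi n m \<rho> c (restrict u {..<n})) \<partial>PiM {..<Suc n} (\<lambda>_. std_normal))"
    by (subst nn_integral_distr) (auto intro: measurable_restrict_subset)
  also have "\<dots> = (\<integral>\<^sup>+u. ennreal (Phi n m \<rho> c u) \<partial>PiM {..<Suc n} (\<lambda>_. std_normal))"
    by (simp add: Phi_restrict)
  finally have eq: "(\<integral>\<^sup>+u. ennreal (Phi n m \<rho> c u) \<partial>PiM {..<n} (\<lambda>_. std_normal)) = \<dots>" .
  have "(\<integral>\<^sup>+u. ennreal (Phi (Suc n) m \<rho> c u) \<partial>PiM {..<Suc n} (\<lambda>_. std_normal))
      \<le> (\<integral>\<^sup>+u. ennreal (Phi n m \<rho> c u) \<partial>PiM {..<Suc n} (\<lambda>_. std_normal))"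
  proof (rule nn_integral_mono_AE)
    show "AE u in PiM {..<Suc n} (\<lambda>_. std_normal). ennreal (Phi (Suc n) m \<rho> c u) \<le> ennreal (Phi n m \<rho> c u)"
      using AE_inj[of "Suc n"]
    proof eventually_elim
      case (elim u)
      show ?case unfolding Phi_def
        by (intro ennreal_leI step_ineq elim G_mono rho G_nonneg G_le1)
    qed
  qed
  then show ?thesis using eq by simp
qed

lemma xstar_not_minf:
  assumes a: "0 < \<alpha>"
  shows "xstar \<alpha> \<rho> \<noteq> -\<infinity>"
proof -
  interpret P: prob_space "gauss_pair \<rho>" by (rule P_prob)
  define B where "B k = {p::real\<times>real. snd p \<le> - real k}" for k :: nat
  have Bs: "range B \<subseteq> sets (gauss_pair \<rho>)"
  proof safe
    fix k
    have "B k = {p \<in> space (borel \<Otimes>\<^sub>M borel). snd p \<le> - real k}"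
      by (simp add: B_def space_pair_measure)
    also have "\<dots> \<in> sets (borel \<Otimes>\<^sub>M borel)" by measurable
    finally show "B k \<in> sets (gauss_pair \<rho>)" by simp
  qed
  have Bd: "decseq B" unfolding B_def decseq_def by auto
  have Bi: "(\<Inter>k. B k) = {}"
  proof -
    have "\<exists>k. p \<notin> B k" for p
    proof -
      obtain k :: nat where "- snd p < real k" using reals_Archimedean2 by blast
      then have "p \<notin> B k" by (auto simp: B_def)
      then show ?thesis by blast
    qed
    then show ?thesis by blast
  qed
  have "(\<lambda>k. measure (gauss_pair \<rho>) (B k)) \<longlonglongrightarrow> 0"
    using P.finite_Lim_measure_decseq[OF Bs Bd] Bi by simp
  from order_tendstoD(2)[OF this a] obtain k0 where k0: "measure (gauss_pair \<rho>) (B k0) < \<alpha>"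
    by (auto simp: eventually_sequentially)
  have "ereal (- real k0) \<le> y" if "y \<in> {ereal x | x. \<alpha> \<le> measure (gauss_pair \<rho>) {p. snd p \<le> x}}" for y
  proof -
    from that obtain x where y: "y = ereal x" and x: "\<alpha> \<le> measure (gauss_pair \<rho>) {p. snd p \<le> x}" by auto
    show ?thesis
    proof (rule ccontr)
      assume "\<not> ?thesis"
      then have "x < - real k0" using y by simp
      then have "{p. snd p \<le> x} \<subseteq> B k0" by (auto simp: B_def)
      then have "measure (gauss_pair \<rho>) {p. snd p \<le> x} \<le> measure (gauss_pair \<rho>) (B k0)"
        using Bs by (intro P.finite_measure_mono) auto
      then show False using x k0 by simp
    qed
  qed
  then have "ereal (- real k0) \<le> xstar \<alpha> \<rho>" unfolding xstar_def by (rule Inf_greatest)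
  then show ?thesis by auto
qed

lemma G_small:
  assumes c: "c \<noteq> -\<infinity>" and rho: "0 < \<rho>" and rho1: "\<rho> \<le> 1" and e: "0 < e"
  shows "\<exists>K\<ge>0. G \<rho> c (-K) < e"
proof -
  interpret SN: prob_space std_normal by (rule N_prob)
  define A where "A k = {v::real. real k < v}" for k :: nat
  have As: "range A \<subseteq> sets std_normal" unfolding A_def by auto
  have Ad: "decseq A" unfolding A_def decseq_def by auto
  have Ai: "(\<Inter>k. A k) = {}"
  proof -
    have "\<exists>k. v \<notin> A k" for v
    proof -
      obtain k :: nat where "v < real k" using reals_Archimedean2 by blast
      then have "v \<notin> A k" by (simp add: A_def)
      then show ?thesis by blast
    qed
    then show ?thesis by blast
  qed
  have "(\<lambda>k. measure std_normal (A k)) \<longlonglongrightarrow> 0"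
    using SN.finite_Lim_measure_decseq[OF As Ad] Ai by simp
  from order_tendstoD(2)[OF this e] obtain k where k: "measure std_normal (A k) < e"
    by (auto simp: eventually_sequentially)
  obtain c0 where c0: "ereal c0 \<le> c"
    using c by (cases c) auto
  define s where "s = sqrt (1 - \<rho>\<^sup>2)"
  have "\<rho>\<^sup>2 \<le> 1" using rho rho1 by (intro power_le_one) auto
  then have s0: "0 \<le> s" unfolding s_def by simp
  define K where "K = max 0 ((s * real k - c0) / \<rho>)"
  have K0: "0 \<le> K" unfolding K_def by simp
  have rK: "s * real k - c0 \<le> \<rho> * K"
  proof -
    have "(s * real k - c0) / \<rho> \<le> K" unfolding K_def by simp
    then show ?thesis using rho by (simp add: divide_le_eq mult.commute)
  qed
  have sub: "{v. \<not> ereal (\<rho> * (-K) + s * v) \<le> c} \<subseteq> A k"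
  proof
    fix v assume "v \<in> {v. \<not> ereal (\<rho> * (-K) + s * v) \<le> c}"
    then have "\<not> ereal (\<rho> * (-K) + s * v) \<le> c" by simp
    then have "c0 < \<rho> * (-K) + s * v" using c0 by (metis ereal_less_eq(3) linorder_not_le order_trans)
    then have "s * real k < s * v" using rK by simp
    then have "real k < v" using s0 by (rule mult_left_less_imp_less)
    then show "v \<in> A k" by (simp add: A_def)
  qed
  have "G \<rho> c (-K) \<le> measure std_normal (A k)"
    unfolding G_def s_def[symmetric] using sub
    by (intro SN.finite_measure_mono) (auto simp: A_def)
  then show ?thesis using k K0 by (intro exI[of _ K]) auto
qed

lemma N_Iio_pos: "0 < measure std_normal {..<a}"
proof -
  interpret SN: prob_space std_normal by (rule N_prob)
  have "emeasure std_normal {..<a} \<noteq> 0"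
  proof
    assume "emeasure std_normal {..<a} = 0"
    then have "{..<a} \<in> null_sets std_normal" by auto
    then have "AE x in lborel. x \<in> {..<a} \<longrightarrow> ennreal (std_normal_density x) = 0"
      unfolding std_normal_def by (subst (asm) null_sets_density_iff) auto
    then have "AE x in lborel. \<not> x < a"
      by eventually_elim (auto simp: std_normal_density_def)
    then have "emeasure lborel {..<a} = 0"
      by (subst (asm) AE_iff_measurable[of "{..<a}"]) auto
    moreover have "emeasure lborel {a - 1..<a} \<le> emeasure lborel {..<a}"
      by (intro emeasure_mono) auto
    ultimately show False by simp
  qed
  then show ?thesis using SN.emeasure_eq_measure[of "{..<a}"] measure_nonneg[of std_normal "{..<a}"]
    by (metis ennreal_0 order_le_less)
qed

lemma q_lt1: "measure std_normal {x. a \<le> x} < 1"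
proof -
  interpret SN: prob_space std_normal by (rule N_prob)
  have "{x. a \<le> x} = space std_normal - {..<a}" by auto
  then have "measure std_normal {x. a \<le> x} = 1 - measure std_normal {..<a}"
    using SN.prob_compl[of "{..<a}"] by simp
  then show ?thesis using N_Iio_pos[of a] by simp
qed

lemma prod_le_factor1:
  fixes f :: "nat \<Rightarrow> real"
  assumes A: "finite A" "j0 \<in> A" and f: "\<And>j. j \<in> A \<Longrightarrow> 0 \<le> f j \<and> f j \<le> 1"
  shows "prod f A \<le> f j0"
proof -
  have "prod f A = f j0 * prod f (A - {j0})" using A by (simp add: prod.remove)
  also have "\<dots> \<le> f j0 * 1"
    using f A by (intro mult_left_mono prod_le_1) auto
  finally show ?thesis by simp
qed

lemma Phi_bound:
  assumes n: "0 < n" and m: "1 \<le> m" and rho: "0 < \<rho>" and K: "0 \<le> K"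
    and us: "u \<in> space (PiM {..<n} (\<lambda>_. std_normal))"
  shows "Phi n m \<rho> c u \<le> G \<rho> c (-K) + indicator (Pi\<^sub>E {..<n} (\<lambda>_. {x. -K \<le> x})) u"
proof -
  have f01: "\<And>j. j \<in> {..<n} \<Longrightarrow> 0 \<le> (if cnt n u j < m then G \<rho> c (u j) else 1) \<and> (if cnt n u j < m then G \<rho> c (u j) else 1) \<le> 1"
    using G_nonneg G_le1 by auto
  have P1: "Phi n m \<rho> c u \<le> 1" unfolding Phi_def using f01 by (intro prod_le_1) auto
  show ?thesis
  proof (cases "u \<in> Pi\<^sub>E {..<n} (\<lambda>_. {x. -K \<le> x})")
    case True
    then show ?thesis using P1 G_nonneg[of \<rho> c "-K"] by simp
  next
    case False
    then obtain j where j: "j < n" "u j < -K" using us by (auto simp: space_PiM PiE_iff)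
    define j0 where "j0 = (SOME j0. j0 \<in> {..<n} \<and> u j0 = Min (u ` {..<n}))"
    have "Min (u ` {..<n}) \<in> u ` {..<n}" using n by (intro Min_in) auto
    then have "\<exists>j0. j0 \<in> {..<n} \<and> u j0 = Min (u ` {..<n})" by auto
    then have j0: "j0 \<in> {..<n}" "u j0 = Min (u ` {..<n})" unfolding j0_def by (metis (mono_tags, lifting) someI_ex)+
    have minle: "u j0 \<le> u k" if "k < n" for k using j0 that by simp
    have "cnt n u j0 = 0" unfolding cnt_def using minle by (auto simp: not_less[symmetric])
    then have c0: "cnt n u j0 < m" using m by simp
    have "Phi n m \<rho> c u \<le> (if cnt n u j0 < m then G \<rho> c (u j0) else 1)"
      unfolding Phi_def using f01 j0 by (intro prod_le_factor1) auto
    also have "\<dots> = G \<rho> c (u j0)" using c0 by simp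
    also have "\<dots> \<le> G \<rho> c (-K)"
      using minle[OF j(1)] j(2) by (intro monoD[OF G_mono[OF rho]]) simp
    also have "\<dots> \<le> G \<rho> c (-K) + indicator (Pi\<^sub>E {..<n} (\<lambda>_. {x. -K \<le> x})) u" by simp
    finally show ?thesis .
  qed
qed

lemma int_bound:
  assumes n: "0 < n" and m: "1 \<le> m" and rho: "0 < \<rho>" and K: "0 \<le> K"
  shows "(\<integral>\<^sup>+u. ennreal (Phi n m \<rho> c u) \<partial>PiM {..<n} (\<lambda>_. std_normal))
     \<le> ennreal (G \<rho> c (-K) + measure std_normal {x. -K \<le> x} ^ n)"
proof -
  interpret SN: prob_space std_normal by (rule N_prob)
  interpret NN: product_prob_space "\<lambda>_. std_normal"
    by (intro product_prob_spaceI N_prob)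
  interpret PN: prob_space "PiM {..<n} (\<lambda>_. std_normal)" by (intro prob_space_PiM N_prob)
  let ?E = "Pi\<^sub>E {..<n} (\<lambda>_. {x::real. -K \<le> x})"
  have Em: "?E \<in> sets (PiM {..<n} (\<lambda>_. std_normal))"
    by (intro sets_PiM_I_finite) auto
  have "(\<integral>\<^sup>+u. ennreal (Phi n m \<rho> c u) \<partial>PiM {..<n} (\<lambda>_. std_normal))
      \<le> (\<integral>\<^sup>+u. ennreal (G \<rho> c (-K)) + indicator ?E u \<partial>PiM {..<n} (\<lambda>_. std_normal))"
  proof (rule nn_integral_mono)
    fix u assume us: "u \<in> space (PiM {..<n} (\<lambda>_. std_normal))"
    have "ennreal (Phi n m \<rho> c u) \<le> ennreal (G \<rho> c (-K) + indicator ?E u)"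
      by (intro ennreal_leI Phi_bound assms us)
    also have "\<dots> = ennreal (G \<rho> c (-K)) + indicator ?E u"
      using G_nonneg by (simp add: ennreal_plus ennreal_indicator)
    finally show "ennreal (Phi n m \<rho> c u) \<le> ennreal (G \<rho> c (-K)) + indicator ?E u" .
  qed
  also have "\<dots> = ennreal (G \<rho> c (-K)) + emeasure (PiM {..<n} (\<lambda>_. std_normal)) ?E"
    using Em by (subst nn_integral_add) (auto simp: PN.emeasure_space_1)
  also have "emeasure (PiM {..<n} (\<lambda>_. std_normal)) ?E = (\<Prod>j<n. emeasure std_normal {x. -K \<le> x})"
    by (subst NN.emeasure_PiM) auto
  also have "\<dots> = ennreal (measure std_normal {x. -K \<le> x} ^ n)"
    by (simp add: SN.emeasure_eq_measure ennreal_power)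
  finally show ?thesis using G_nonneg by (simp add: ennreal_plus)
qed

theorem mainTheorem8:
  fixes m :: nat and \<alpha> \<rho> :: real
  assumes "m \<ge> 1" and "0 < \<alpha>" and "\<alpha> \<le> 1" and "0 < \<rho>" and "\<rho> \<le> 1"
  shows "(\<forall>n n'. m \<le> n \<longrightarrow> n \<le> n' \<longrightarrow> p_success_G n m \<alpha> \<rho> \<le> p_success_G n' m \<alpha> \<rho>)
       \<and> (\<lambda>n. p_success_G n m \<alpha> \<rho>) \<longlonglongrightarrow> 1"
proof -
  note m = assms(1) and a = assms(2) and rho = assms(4) and rho1 = assms(5)
  define c where "c = xstar \<alpha> \<rho>"
  define f where "f n = measure (PiM {..<n} (\<lambda>_. gauss_pair \<rho>)) (FailS n m \<rho> c)" for n
  have p: "p_success_G n m \<alpha> \<rho> = 1 - f n" for n unfolding f_def c_def by (rule p_eq)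
  have f0: "0 \<le> f n" for n unfolding f_def by simp
  have fe: "ennreal (f n) = (\<integral>\<^sup>+u. ennreal (Phi n m \<rho> c u) \<partial>PiM {..<n} (\<lambda>_. std_normal))" for n
  proof -
    interpret Q: prob_space "PiM {..<n} (\<lambda>_. gauss_pair \<rho>)" by (intro prob_space_PiM P_prob)
    show ?thesis unfolding f_def using fail_eq[OF rho, of n m c] Q.emeasure_eq_measure by simp
  qed
  have fS: "f (Suc n) \<le> f n" for n
  proof -
    have "ennreal (f (Suc n)) \<le> ennreal (f n)" unfolding fe by (rule fail_mono[OF rho])
    then show ?thesis using f0 by (simp add: ennreal_le_iff)
  qed
  have dec: "decseq f" by (rule decseq_SucI) (rule fS)
  have partA: "\<forall>n n'. m \<le> n \<longrightarrow> n \<le> n' \<longrightarrow> p_success_G n m \<alpha> \<rho> \<le> p_success_G n' m \<alpha> \<rho>"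
    using decseqD[OF dec] by (auto simp: p)
  have cinf: "c \<noteq> -\<infinity>" unfolding c_def by (rule xstar_not_minf[OF a])
  have fbound: "f n \<le> G \<rho> c (-K) + measure std_normal {x. -K \<le> x} ^ n" if "0 < n" "0 \<le> K" for n K
  proof -
    have "ennreal (f n) \<le> ennreal (G \<rho> c (-K) + measure std_normal {x. -K \<le> x} ^ n)"
      unfolding fe using that m rho by (intro int_bound) auto
    moreover have "0 \<le> G \<rho> c (-K) + measure std_normal {x. -K \<le> x} ^ n"
      using G_nonneg by simp
    ultimately show ?thesis by (simp add: ennreal_le_iff)
  qed
  have "f \<longlonglongrightarrow> 0"
  proof (rule LIMSEQ_I)
    fix r :: real assume r: "0 < r"
    obtain K where K: "0 \<le> K" "G \<rho> c (-K) < r / 2"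
      using G_small[OF cinf rho rho1, of "r/2"] r by auto
    define q where "q = measure std_normal {x. -K \<le> x}"
    have q: "0 \<le> q" "q < 1" unfolding q_def using q_lt1 by auto
    have "(\<lambda>n. q ^ n) \<longlonglongrightarrow> 0" using q by (intro LIMSEQ_power_zero) simp
    from order_tendstoD(2)[OF this, of "r/2"] r obtain no where no: "\<And>n. n \<ge> no \<Longrightarrow> q ^ n < r / 2"
      by (auto simp: eventually_sequentially)
    show "\<exists>no. \<forall>n\<ge>no. norm (f n - 0) < r"
    proof (intro exI[of _ "max no 1"] allI impI)
      fix n assume n: "max no 1 \<le> n"
      have "f n \<le> G \<rho> c (-K) + q ^ n" unfolding q_def using n K by (intro fbound) auto
      also have "\<dots> < r" using K(2) no[of n] n by simp
      finally show "norm (f n - 0) < r" using f0[of n] by simp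
    qed
  qed
  then have "(\<lambda>n. 1 - f n) \<longlonglongrightarrow> 1 - 0" by (intro tendsto_diff tendsto_const)
  then have "(\<lambda>n. p_success_G n m \<alpha> \<rho>) \<longlonglongrightarrow> 1" by (simp add: p)
  with partA show ?thesis by blast
qed

end
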